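(* Let $\langle X, d\rangle$ be a metric space. The following conditions are equivalent: (1) $X$ is cofinally Bourbaki quasi-complete; (2) $X$ is strongly uniformly locally bounded and, for every metric space $\langle Y,\rho\rangle$, every locally Lipschitz function $f: X\to Y$ is strongly uniformly locally Lipschitz; (3) $X$ is strongly uniformly locally bounded and every real-valued locally Lipschitz function on $X$ is strongly uniformly locally Lipschitz; (4) $X$ is strongly uniformly locally bounded and the real-valued strongly uniformly locally Lipschitz functions on $X$ are uniformly dense in $C(X,\mathbb{R})$, the set of all real-valued continuous functions on $X$.
   Context: For $\varepsilon>0$ and $x,y\in X$, an $\varepsilon$-chain from $x$ to $y$ is a finite sequence $x=x_0,x_1,\dots,x_n=y$ in $X$ with $d(x_{i-1},x_i)<\varepsilon$ for all $i$. The $\varepsilon$-chainable component $S^\infty_d(x,\varepsilon)$ is the set of all $y\in X$ that can be joined to $x$ by an $\varepsilon$-chain. A sequence $\langle x_n\rangle$ in $X$ is cofinally Bourbaki quasi-Cauchy if for every $\varepsilon>0$ there is an infinite set $N_\varepsilon\subseteq\mathbb{N}$ such that for all $j,k\in N_\varepsilon$, $x_j$ and $x_k$ can be joined by an $\varepsilon$-chain. $X$ is cofinally Bourbaki quasi-complete if every cofinally Bourbaki quasi-Cauchy sequence in $X$ has a cluster point. $X$ is strongly uniformly locally bounded if there is $\delta>0$ such that $S^\infty_d(x,\delta)$ is a bounded subset of $X$ for every $x\in X$. A function $f:X\to Y$ into a metric space $\langle Y,\rho\rangle$ is locally Lipschitz if each $x\in X$ has a ball $S_d(x,\delta_x)$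 on which $f$ is Lipschitz; $f$ is strongly uniformly locally Lipschitz (also called uniformly locally chain-Lipschitz) if there exists $\delta>0$ such that for each $x\in X$ the restriction of $f$ to $S^\infty_d(x,\delta)$ is Lipschitz (the Lipschitz constant may depend on $x$). Uniform density means density with respect to uniform (sup-norm) convergence. *)

theory Defs
  imports "HOL-Analysis.Analysis"
begin

definition eps_chain :: "'a metric \<Rightarrow> real \<Rightarrow> 'a \<Rightarrow> 'a \<Rightarrow> bool" where
  "eps_chain X e x y \<longleftrightarrow>
     (\<exists>(n::nat) (p::nat \<Rightarrow> 'a). p 0 = x \<and> p n = y \<and> (\<forall>i\<le>n. p i \<in> mspace X) \<and>
        (\<forall>i<n. mdist X (p i) (p (Suc i)) < e))"

definition chain_comp :: "'a metric \<Rightarrow> 'a \<Rightarrow> real \<Rightarrow> 'a set" where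
  "chain_comp X x e = {y \<in> mspace X. eps_chain X e x y}"

definition cofinally_Bourbaki_quasi_Cauchy :: "'a metric \<Rightarrow> (nat \<Rightarrow> 'a) \<Rightarrow> bool" where
  "cofinally_Bourbaki_quasi_Cauchy X s \<longleftrightarrow>
     (\<forall>e>0. \<exists>N::nat set. infinite N \<and> (\<forall>j\<in>N. \<forall>k\<in>N. eps_chain X e (s j) (s k)))"

definition cluster_point :: "'a metric \<Rightarrow> (nat \<Rightarrow> 'a) \<Rightarrow> 'a \<Rightarrow> bool" where
  "cluster_point X s p \<longleftrightarrow> p \<in> mspace X \<and>
     (\<forall>e>0. \<forall>n. \<exists>k\<ge>n. mdist X (s k) p < e)"

definition cofinally_Bourbaki_quasi_complete :: "'a metric \<Rightarrow> bool" where
  "cofinally_Bourbaki_quasi_complete X \<longleftrightarrow>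
     (\<forall>s. range s \<subseteq> mspace X \<and> cofinally_Bourbaki_quasi_Cauchy X s \<longrightarrow>
          (\<exists>p. cluster_point X s p))"

definition strongly_uniformly_locally_bounded :: "'a metric \<Rightarrow> bool" where
  "strongly_uniformly_locally_bounded X \<longleftrightarrow>
     (\<exists>\<delta>>0. \<forall>x\<in>mspace X. Metric_space.mbounded (mspace X) (mdist X) (chain_comp X x \<delta>))"

definition locally_Lipschitz :: "'a metric \<Rightarrow> 'b metric \<Rightarrow> ('a \<Rightarrow> 'b) \<Rightarrow> bool" where
  "locally_Lipschitz X Y f \<longleftrightarrow> f \<in> mspace X \<rightarrow> mspace Y \<and>
     (\<forall>x\<in>mspace X. \<exists>\<delta>>0. Lipschitz_continuous_map (submetric X (mball_of X x \<delta>)) Y f)"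

definition strongly_uniformly_locally_Lipschitz :: "'a metric \<Rightarrow> 'b metric \<Rightarrow> ('a \<Rightarrow> 'b) \<Rightarrow> bool" where
  "strongly_uniformly_locally_Lipschitz X Y f \<longleftrightarrow> f \<in> mspace X \<rightarrow> mspace Y \<and>
     (\<exists>\<delta>>0. \<forall>x\<in>mspace X. Lipschitz_continuous_map (submetric X (chain_comp X x \<delta>)) Y f)"

text \<open>Condition (2), for target metric spaces whose points live in type \<open>'b\<close>.\<close>
definition cond2 :: "'a metric \<Rightarrow> 'b itself \<Rightarrow> bool" where
  "cond2 X (T::'b itself) \<longleftrightarrow> strongly_uniformly_locally_bounded X \<and>
     (\<forall>(Y::'b metric) f. locally_Lipschitz X Y f \<longrightarrow> strongly_uniformly_locally_Lipschitz X Y f)"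

end

theory Submission
  imports Defs
begin

lemma chain_mem: "eps_chain X e x y \<Longrightarrow> x \<in> mspace X \<and> y \<in> mspace X"
  unfolding eps_chain_def by auto

lemma chain_refl: "x \<in> mspace X \<Longrightarrow> eps_chain X e x x"
  unfolding eps_chain_def by (rule exI[of _ 0], rule exI[of _ "\<lambda>_. x"]) auto

lemma chain_step: "x \<in> mspace X \<Longrightarrow> y \<in> mspace X \<Longrightarrow> mdist X x y < e \<Longrightarrow> eps_chain X e x y"
  unfolding eps_chain_def by (rule exI[of _ 1], rule exI[of _ "\<lambda>i. if i = 0 then x else y"]) auto

lemma chain_mono: assumes "eps_chain X e x y" "e \<le> e'" shows "eps_chain X e' x y"
proof -
  obtain n p where p: "p 0 = x" "p n = y" "\<forall>i\<le>n. p i \<in> mspace X" "\<forall>i<n. mdist X (p i) (p (Suc i)) < e"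
    using assms(1) unfolding eps_chain_def by blast
  have "\<forall>i<n. mdist X (p i) (p (Suc i)) < e'" using p(4) assms(2) by force
  then show ?thesis unfolding eps_chain_def using p by blast
qed

lemma chain_sym: assumes "eps_chain X e x y" shows "eps_chain X e y x"
proof -
  obtain n p where p: "p 0 = x" "p n = y" "\<forall>i\<le>n. p i \<in> mspace X" "\<forall>i<n. mdist X (p i) (p (Suc i)) < e"
    using assms unfolding eps_chain_def by blast
  show ?thesis unfolding eps_chain_def
  proof (intro exI conjI allI impI)
    show "(\<lambda>i. p (n - i)) 0 = y" using p by simp
    show "(\<lambda>i. p (n - i)) n = x" using p by simp
    show "(\<lambda>i. p (n - i)) i \<in> mspace X" if "i \<le> n" for i using p by simp
    show "mdist X ((\<lambda>i. p (n - i)) i) ((\<lambda>i. p (n - i)) (Suc i)) < e" if "i < n" for i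
    proof -
      have "n - i = Suc (n - Suc i)" using that by simp
      then show ?thesis using p(4)[rule_format, of "n - Suc i"] that
        by (simp add: mdist_commute)
    qed
  qed
qed

lemma chain_trans: assumes "eps_chain X e x y" "eps_chain X e y z" shows "eps_chain X e x z"
proof -
  obtain n p where p: "p 0 = x" "p n = y" "\<forall>i\<le>n. p i \<in> mspace X" "\<forall>i<n. mdist X (p i) (p (Suc i)) < e"
    using assms(1) unfolding eps_chain_def by blast
  obtain m q where q: "q 0 = y" "q m = z" "\<forall>i\<le>m. q i \<in> mspace X" "\<forall>i<m. mdist X (q i) (q (Suc i)) < e"
    using assms(2) unfolding eps_chain_def by blast
  define r where "r i = (if i \<le> n then p i else q (i - n))" for i
  show ?thesis unfolding eps_chain_def
  proof (intro exI conjI allI impI)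
    show "r 0 = x" using p by (simp add: r_def)
    show "r (n+m) = z"
    proof (cases "m = 0")
      case True then show ?thesis using p q by (simp add: r_def)
    next
      case False then show ?thesis using q by (simp add: r_def)
    qed
    show "r i \<in> mspace X" if "i \<le> n+m" for i
    proof (cases "i \<le> n")
      case True then show ?thesis using p(3) by (simp add: r_def)
    next
      case False then show ?thesis using q(3) that by (simp add: r_def)
    qed
    show "mdist X (r i) (r (Suc i)) < e" if "i < n+m" for i
    proof (cases "i < n")
      case True then show ?thesis using p(4) by (simp add: r_def)
    next
      case False
      then have e1: "Suc i - n = Suc (i - n)" and e2: "\<not> Suc i \<le> n" by simp_all
      have "i - n < m" using that False by simp
      then have "mdist X (q (i - n)) (q (Suc (i - n))) < e" using q(4) by blast
      moreover have "r i = q (i - n)"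
      proof (cases "i = n")
        case True then show ?thesis using p(2) q(1) by (simp add: r_def)
      qed (use False in \<open>simp add: r_def\<close>)
      moreover have "r (Suc i) = q (Suc (i - n))" using e1 e2 by (simp add: r_def)
      ultimately show ?thesis by simp
    qed
  qed
qed

lemma comp_chain: "y \<in> chain_comp X x e \<Longrightarrow> z \<in> chain_comp X x e \<Longrightarrow> eps_chain X e y z"
  unfolding chain_comp_def by (metis (no_types, lifting) chain_sym chain_trans mem_Collect_eq)

lemma comp_mono: "e \<le> e' \<Longrightarrow> chain_comp X x e \<subseteq> chain_comp X x e'"
  unfolding chain_comp_def using chain_mono by (metis (no_types, lifting) Collect_mono)

lemma comp_self: "x \<in> mspace X \<Longrightarrow> x \<in> chain_comp X x e"
  unfolding chain_comp_def using chain_refl by simp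

lemma comp_sub: "chain_comp X x e \<subseteq> mspace X"
  unfolding chain_comp_def by blast

lemma comp_memD: "y \<in> chain_comp X x e \<Longrightarrow> y \<in> mspace X"
  unfolding chain_comp_def by simp

lemma comp_mem: "y \<in> chain_comp X x e \<longleftrightarrow> y \<in> mspace X \<and> eps_chain X e x y"
  unfolding chain_comp_def by simp

lemma not_cbqc:
  fixes t :: "nat \<Rightarrow> nat \<Rightarrow> 'a" and X :: "'a metric"
  assumes tM: "\<And>n k. t n k \<in> mspace X"
    and tc: "\<And>n j k. eps_chain X (1 / real (Suc n)) (t n j) (t n k)"
    and fin: "\<And>p. p \<in> mspace X \<Longrightarrow> \<exists>e>0. finite {(n,k). mdist X (t n k) p < e}"
  shows "\<not> cofinally_Bourbaki_quasi_complete X"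
proof
  assume cb: "cofinally_Bourbaki_quasi_complete X"
  define s where "s m = (case prod_decode m of (n,k) \<Rightarrow> t n k)" for m
  have s_enc: "s (prod_encode (n,k)) = t n k" for n k by (simp add: s_def)
  have rs: "range s \<subseteq> mspace X"
  proof
    fix y assume "y \<in> range s"
    then obtain m where "y = s m" by blast
    then show "y \<in> mspace X" using tM by (simp add: s_def split: prod.splits)
  qed
  have cq: "cofinally_Bourbaki_quasi_Cauchy X s"
    unfolding cofinally_Bourbaki_quasi_Cauchy_def
  proof (intro allI impI)
    fix e :: real assume "e > 0"
    then obtain n where n: "1 / real (Suc n) < e"
      using reals_Archimedean by (metis inverse_eq_divide)
    define N where "N = range (\<lambda>k. prod_encode (n,k))"
    have "inj (\<lambda>k. prod_encode (n,k))" by (simp add: inj_on_def prod_encode_eq)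
    then have "infinite N" unfolding N_def using range_inj_infinite by blast
    moreover have "\<forall>j\<in>N. \<forall>k\<in>N. eps_chain X e (s j) (s k)"
      unfolding N_def using tc n chain_mono s_enc by (smt (verit) imageE)
    ultimately show "\<exists>N. infinite N \<and> (\<forall>j\<in>N. \<forall>k\<in>N. eps_chain X e (s j) (s k))" by blast
  qed
  obtain p where p: "cluster_point X s p" using cb rs cq unfolding cofinally_Bourbaki_quasi_complete_def by blast
  then have pM: "p \<in> mspace X" unfolding cluster_point_def by blast
  obtain e where e: "e > 0" "finite {(n,k). mdist X (t n k) p < e}" using fin[OF pM] by blast
  have "{m. mdist X (s m) p < e} \<subseteq> prod_encode ` {(n,k). mdist X (t n k) p < e}"
  proof
    fix m assume "m \<in> {m. mdist X (s m) p < e}"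
    moreover obtain a b where ab: "prod_decode m = (a,b)" by fastforce
    ultimately have "mdist X (t a b) p < e" by (simp add: s_def)
    moreover have "m = prod_encode (a,b)" using ab by (metis prod_decode_inverse)
    ultimately show "m \<in> prod_encode ` {(n,k). mdist X (t n k) p < e}" by blast
  qed
  then have "finite {m. mdist X (s m) p < e}" using e(2) finite_surj by blast
  moreover have "\<forall>n. \<exists>k\<ge>n. k \<in> {m. mdist X (s m) p < e}"
    using p e(1) unfolding cluster_point_def by blast
  ultimately show False using infinite_nat_iff_unbounded_le by blast
qed

lemma mb_iff: "Metric_space.mbounded (mspace X) (mdist X) S \<longleftrightarrow> S \<subseteq> mspace X \<and> (\<exists>B. \<forall>x\<in>S. \<forall>y\<in>S. mdist X x y \<le> B)"
  by (rule Metric_space.mbounded_alt[OF Metric_space_mspace_mdist])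

lemma fin_pairs: "finite {(n::nat,k::nat). real n + real k < C}"
proof -
  have "{(n::nat,k::nat). real n + real k < C} \<subseteq> {..nat \<lceil>C\<rceil>} \<times> {..nat \<lceil>C\<rceil>}"
  proof
    fix z assume "z \<in> {(n::nat,k::nat). real n + real k < C}"
    then obtain n k where z: "z = (n,k)" "real n + real k < C" by blast
    then have "real n \<le> C" "real k \<le> C" by linarith+
    then have "n \<le> nat \<lceil>C\<rceil>" "k \<le> nat \<lceil>C\<rceil>" by linarith+
    then show "z \<in> {..nat \<lceil>C\<rceil>} \<times> {..nat \<lceil>C\<rceil>}" using z by simp
  qed
  then show ?thesis by (rule finite_subset) simp
qed

lemma cbqc_sulb:
  assumes cb: "cofinally_Bourbaki_quasi_complete X"
  shows "strongly_uniformly_locally_bounded X"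
proof (rule ccontr)
  assume "\<not> ?thesis"
  then have h: "\<forall>\<delta>>0. \<exists>x\<in>mspace X. \<not> Metric_space.mbounded (mspace X) (mdist X) (chain_comp X x \<delta>)"
    unfolding strongly_uniformly_locally_bounded_def by blast
  have "\<forall>n. \<exists>x. x \<in> mspace X \<and> \<not> Metric_space.mbounded (mspace X) (mdist X) (chain_comp X x (1 / real (Suc n)))"
  proof
    fix n
    have "(0::real) < 1 / real (Suc n)" by simp
    then show "\<exists>x. x \<in> mspace X \<and> \<not> Metric_space.mbounded (mspace X) (mdist X) (chain_comp X x (1 / real (Suc n)))"
      using h by blast
  qed
  then obtain x where x: "\<And>n. x n \<in> mspace X" "\<And>n. \<not> Metric_space.mbounded (mspace X) (mdist X) (chain_comp X (x n) (1 / real (Suc n)))"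
    by metis
  have "\<exists>y. y \<in> chain_comp X (x n) (1 / real (Suc n)) \<and> real n + real k < mdist X (x 0) y" for n k
  proof (rule ccontr)
    let ?C = "chain_comp X (x n) (1 / real (Suc n))"
    assume "\<not> ?thesis"
    then have "\<forall>y\<in>?C. \<not> real n + real k < mdist X (x 0) y" by blast
    then have le: "\<forall>y\<in>?C. mdist X (x 0) y \<le> real n + real k" by (simp add: not_less)
    have "\<forall>y\<in>?C. \<forall>z\<in>?C. mdist X y z \<le> 2 * (real n + real k)"
    proof (intro ballI)
      fix y z assume yz: "y \<in> ?C" "z \<in> ?C"
      then have "y \<in> mspace X" "z \<in> mspace X" by (simp_all add: comp_memD)
      then have "mdist X y z \<le> mdist X y (x 0) + mdist X (x 0) z"
        using x(1) mdist_triangle[where m=X and x=y and y="x 0" and z=z] by blast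
      moreover have "mdist X y (x 0) = mdist X (x 0) y" by (rule mdist_commute)
      moreover have "mdist X (x 0) y \<le> real n + real k" "mdist X (x 0) z \<le> real n + real k"
        using le yz by auto
      ultimately show "mdist X y z \<le> 2 * (real n + real k)" by argo
    qed
    moreover have "?C \<subseteq> mspace X" by (rule comp_sub)
    ultimately have "Metric_space.mbounded (mspace X) (mdist X) ?C" unfolding mb_iff by blast
    then show False using x(2)[of n] by simp
  qed
  then obtain t where t: "\<And>n k. t n k \<in> chain_comp X (x n) (1 / real (Suc n))"
    "\<And>n k. real n + real k < mdist X (x 0) (t n k)" by metis
  have "\<not> cofinally_Bourbaki_quasi_complete X"
  proof (rule not_cbqc[of t])
    show "\<And>n k. t n k \<in> mspace X" using t(1) by (rule comp_memD)
    show "\<And>n j k. eps_chain X (1 / real (Suc n)) (t n j) (t n k)" by (rule comp_chain[OF t(1) t(1)])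
    fix p assume pM: "p \<in> mspace X"
    have "{(n,k). mdist X (t n k) p < 1} \<subseteq> {(n,k). real n + real k < mdist X (x 0) p + 1}"
    proof
      fix z assume "z \<in> {(n,k). mdist X (t n k) p < 1}"
      then obtain n k where z: "z = (n,k)" "mdist X (t n k) p < 1" by blast
      have "t n k \<in> mspace X" using t(1) by (rule comp_memD)
      then have "mdist X (x 0) (t n k) \<le> mdist X (x 0) p + mdist X p (t n k)"
        using x(1) pM mdist_triangle[where m=X and x="x 0" and y=p and z="t n k"] by blast
      moreover have "mdist X p (t n k) = mdist X (t n k) p" by (rule mdist_commute)
      ultimately have "real n + real k < mdist X (x 0) p + 1" using z(2) t(2)[of n k] by linarith
      then show "z \<in> {(n,k). real n + real k < mdist X (x 0) p + 1}" using z(1) by simp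
    qed
    then show "\<exists>e>0. finite {(n,k). mdist X (t n k) p < e}"
      using fin_pairs[of "mdist X (x 0) p + 1"] finite_subset zero_less_one by blast
  qed
  then show False using cb by blast
qed

lemma locLip_into: "locally_Lipschitz X Y f \<Longrightarrow> a \<in> mspace X \<Longrightarrow> f a \<in> mspace Y"
  unfolding locally_Lipschitz_def by blast

lemma locLip_at:
  assumes "locally_Lipschitz X Y f" "p \<in> mspace X"
  shows "\<exists>r>0. \<exists>L\<ge>0. \<forall>a\<in>mspace X. \<forall>b\<in>mspace X. mdist X p a < r \<longrightarrow> mdist X p b < r \<longrightarrow>
           mdist Y (f a) (f b) \<le> L * mdist X a b"
proof -
  obtain r where r: "r > 0" "Lipschitz_continuous_map (submetric X (mball_of X p r)) Y f"
    using assms unfolding locally_Lipschitz_def by blast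
  then obtain B where B: "\<forall>a\<in>mball_of X p r \<inter> mspace X. \<forall>b\<in>mball_of X p r \<inter> mspace X. mdist Y (f a) (f b) \<le> B * mdist X a b"
    unfolding Lipschitz_continuous_map_def by auto
  have "\<forall>a\<in>mspace X. \<forall>b\<in>mspace X. mdist X p a < r \<longrightarrow> mdist X p b < r \<longrightarrow>
           mdist Y (f a) (f b) \<le> \<bar>B\<bar> * mdist X a b"
  proof (intro ballI impI)
    fix a b assume ab: "a \<in> mspace X" "b \<in> mspace X" "mdist X p a < r" "mdist X p b < r"
    then have "mdist Y (f a) (f b) \<le> B * mdist X a b" using B assms(2) by auto
    also have "\<dots> \<le> \<bar>B\<bar> * mdist X a b" by (simp add: mult_right_mono)
    finally show "mdist Y (f a) (f b) \<le> \<bar>B\<bar> * mdist X a b" .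
  qed
  then show ?thesis using r(1) abs_ge_zero by blast
qed

lemma cbqc_fbounded:
  assumes cb: "cofinally_Bourbaki_quasi_complete X" and lf: "locally_Lipschitz X Y f"
  shows "\<exists>n0. \<forall>x\<in>mspace X. \<exists>B. \<forall>a\<in>chain_comp X x (1 / real (Suc n0)). mdist Y (f x) (f a) \<le> B"
proof (rule ccontr)
  assume nb: "\<not> ?thesis"
  have "\<forall>n. \<exists>x. x \<in> mspace X \<and> (\<forall>B. \<exists>a\<in>chain_comp X x (1 / real (Suc n)). B < mdist Y (f x) (f a))"
  proof
    fix n
    obtain x where "x \<in> mspace X" "\<not> (\<exists>B. \<forall>a\<in>chain_comp X x (1 / real (Suc n)). mdist Y (f x) (f a) \<le> B)"
      using nb by blast
    then show "\<exists>x. x \<in> mspace X \<and> (\<forall>B. \<exists>a\<in>chain_comp X x (1 / real (Suc n)). B < mdist Y (f x) (f a))"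
      by (auto simp: not_le)
  qed
  then obtain x where x: "\<And>n. x n \<in> mspace X"
    "\<And>n B. \<exists>a\<in>chain_comp X (x n) (1 / real (Suc n)). B < mdist Y (f (x n)) (f a)"
    by metis
  define y0 where "y0 = f (x 0)"
  have y0: "y0 \<in> mspace Y" unfolding y0_def using locLip_into[OF lf x(1)] .
  have "\<exists>a. a \<in> chain_comp X (x n) (1 / real (Suc n)) \<and> real n + real k < mdist Y y0 (f a)" for n k
  proof -
    obtain a where a: "a \<in> chain_comp X (x n) (1 / real (Suc n))"
      "real n + real k + mdist Y y0 (f (x n)) < mdist Y (f (x n)) (f a)"
      using x(2) by blast
    have aM: "a \<in> mspace X" using a(1) by (rule comp_memD)
    have "mdist Y (f (x n)) (f a) \<le> mdist Y (f (x n)) y0 + mdist Y y0 (f a)"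
      using mdist_triangle[where m=Y and x="f (x n)" and y=y0 and z="f a"] locLip_into[OF lf x(1)]
        locLip_into[OF lf aM] y0 by blast
    moreover have "mdist Y (f (x n)) y0 = mdist Y y0 (f (x n))" by (rule mdist_commute)
    ultimately have "real n + real k < mdist Y y0 (f a)" using a(2) by linarith
    then show ?thesis using a(1) by blast
  qed
  then obtain t where t: "\<And>n k. t n k \<in> chain_comp X (x n) (1 / real (Suc n))"
    "\<And>n k. real n + real k < mdist Y y0 (f (t n k))" by metis
  have tM: "\<And>n k. t n k \<in> mspace X" using t(1) by (rule comp_memD)
  have "\<not> cofinally_Bourbaki_quasi_complete X"
  proof (rule not_cbqc[of t])
    show "\<And>n k. t n k \<in> mspace X" by (rule tM)
    show "\<And>n j k. eps_chain X (1 / real (Suc n)) (t n j) (t n k)" by (rule comp_chain[OF t(1) t(1)])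
    fix p assume pM: "p \<in> mspace X"
    obtain r L where rL: "r > 0" "L \<ge> 0" "\<forall>a\<in>mspace X. \<forall>b\<in>mspace X. mdist X p a < r \<longrightarrow> mdist X p b < r \<longrightarrow>
           mdist Y (f a) (f b) \<le> L * mdist X a b"
      using locLip_at[OF lf pM] by blast
    define e where "e = min r (1 / (L + 1))"
    have e: "e > 0" "e \<le> r" "e \<le> 1 / (L + 1)" unfolding e_def using rL by auto
    have "{(n,k). mdist X (t n k) p < e} \<subseteq> {(n,k). real n + real k < mdist Y y0 (f p) + 1}"
    proof
      fix z assume "z \<in> {(n,k). mdist X (t n k) p < e}"
      then obtain n k where z: "z = (n,k)" "mdist X (t n k) p < e" by blast
      have dc: "mdist X p (t n k) = mdist X (t n k) p" by (rule mdist_commute)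
      have dpp: "mdist X p p < r" using mdist_zero[OF pM pM] rL(1) by simp
      have dpt: "mdist X p (t n k) < r" using z(2) dc e(2) by linarith
      have "mdist Y (f p) (f (t n k)) \<le> L * mdist X p (t n k)"
        using rL(3) pM tM[of n k] dpp dpt by blast
      also have "\<dots> \<le> L * (1 / (L + 1))"
        using dc z(2) e(3) rL(2) by (intro mult_left_mono) auto
      also have "\<dots> < 1" using rL(2) by (simp add: field_simps)
      finally have d1: "mdist Y (f p) (f (t n k)) < 1" .
      have "mdist Y y0 (f (t n k)) \<le> mdist Y y0 (f p) + mdist Y (f p) (f (t n k))"
        using mdist_triangle[where m=Y and x=y0 and y="f p" and z="f (t n k)"] y0
          locLip_into[OF lf pM] locLip_into[OF lf tM[of n k]] by blast
      then have "real n + real k < mdist Y y0 (f p) + 1" using d1 t(2)[of n k] by linarith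
      then show "z \<in> {(n,k). real n + real k < mdist Y y0 (f p) + 1}" using z(1) by simp
    qed
    then show "\<exists>e>0. finite {(n,k). mdist X (t n k) p < e}"
      using fin_pairs[of "mdist Y y0 (f p) + 1"] finite_subset e(1) by blast
  qed
  then show False using cb by blast
qed

lemma mdist_self_zero: "p \<in> mspace X \<Longrightarrow> mdist X p p = 0"
  using mdist_zero[of p X p] by simp

lemma cbqc_sull:
  assumes cb: "cofinally_Bourbaki_quasi_complete X" and lf: "locally_Lipschitz X Y f"
  shows "strongly_uniformly_locally_Lipschitz X Y f"
proof (rule ccontr)
  obtain n0 where bd: "\<forall>x\<in>mspace X. \<exists>B. \<forall>a\<in>chain_comp X x (1 / real (Suc n0)). mdist Y (f x) (f a) \<le> B"
    using cbqc_fbounded[OF cb lf] by blast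
  have fM: "f \<in> mspace X \<rightarrow> mspace Y" using lf unfolding locally_Lipschitz_def by blast
  assume "\<not> ?thesis"
  then have nl: "\<forall>\<delta>>0. \<exists>x\<in>mspace X. \<not> Lipschitz_continuous_map (submetric X (chain_comp X x \<delta>)) Y f"
    using fM unfolding strongly_uniformly_locally_Lipschitz_def by blast
  have "\<forall>n. \<exists>x. x \<in> mspace X \<and> \<not> Lipschitz_continuous_map (submetric X (chain_comp X x (1 / real (Suc (n + n0))))) Y f"
  proof
    fix n
    have "(0::real) < 1 / real (Suc (n + n0))" by simp
    then show "\<exists>x. x \<in> mspace X \<and> \<not> Lipschitz_continuous_map (submetric X (chain_comp X x (1 / real (Suc (n + n0))))) Y f"
      using nl by blast
  qed
  then obtain x where x: "\<And>n. x n \<in> mspace X"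
    "\<And>n. \<not> Lipschitz_continuous_map (submetric X (chain_comp X (x n) (1 / real (Suc (n + n0))))) Y f"
    by metis
  define C where "C n = chain_comp X (x n) (1 / real (Suc (n + n0)))" for n
  have CM: "C n \<subseteq> mspace X" for n unfolding C_def by (rule comp_sub)
  have C1: "C n \<subseteq> chain_comp X (x n) (1 / real (Suc n))" for n
    unfolding C_def by (rule comp_mono) (simp add: frac_le)
  have C0: "C n \<subseteq> chain_comp X (x n) (1 / real (Suc n0))" for n
    unfolding C_def by (rule comp_mono) (simp add: frac_le)
  have xC: "x n \<in> C n" for n unfolding C_def by (rule comp_self[OF x(1)])
  have nlC: "\<forall>K. \<exists>a\<in>C n. \<exists>b\<in>C n. K * mdist X a b < mdist Y (f a) (f b)" for n
  proof -
    have sub: "mspace (submetric X (C n)) = C n" using CM[of n] by auto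
    have "f \<in> mspace (submetric X (C n)) \<rightarrow> mspace Y" using fM sub CM[of n] by auto
    then have "\<not> (\<exists>B. \<forall>a\<in>C n. \<forall>b\<in>C n. mdist Y (f a) (f b) \<le> B * mdist X a b)"
      using x(2)[of n] sub unfolding Lipschitz_continuous_map_def C_def by auto
    then show ?thesis by (auto simp: not_le)
  qed
  have "\<exists>a b. a \<in> C n \<and> b \<in> C n \<and> (real n + real k) * mdist X a b < mdist Y (f a) (f b)
          \<and> mdist X a b < 1 / (real n + real k + 1)" for n k
  proof -
    obtain B where B: "\<forall>a\<in>C n. mdist Y (f (x n)) (f a) \<le> B"
      using bd x(1)[of n] C0[of n] by blast
    have "mdist Y (f (x n)) (f (x n)) \<le> B" using B xC[of n] by blast
    then have B0: "0 \<le> B" using mdist_nonneg[of Y "f (x n)" "f (x n)"] by linarith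
    define K where "K = (2 * B + 1) * (real n + real k + 1)"
    obtain a b where ab: "a \<in> C n" "b \<in> C n" "K * mdist X a b < mdist Y (f a) (f b)"
      using nlC[of n] by blast
    have fa: "f a \<in> mspace Y" "f b \<in> mspace Y" "f (x n) \<in> mspace Y"
      using fM ab(1,2) CM[of n] x(1)[of n] by auto
    have "mdist Y (f a) (f b) \<le> mdist Y (f a) (f (x n)) + mdist Y (f (x n)) (f b)"
      using mdist_triangle[where m=Y and x="f a" and y="f (x n)" and z="f b"] fa by blast
    moreover have "mdist Y (f a) (f (x n)) = mdist Y (f (x n)) (f a)" by (rule mdist_commute)
    moreover have "mdist Y (f (x n)) (f a) \<le> B" "mdist Y (f (x n)) (f b) \<le> B" using B ab(1,2) by auto
    ultimately have r2: "mdist Y (f a) (f b) \<le> 2 * B" by linarith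
    have d0: "0 \<le> mdist X a b" by simp
    have "(2 * B + 1) * ((real n + real k + 1) * mdist X a b) < 2 * B + 1"
      using ab(3) r2 unfolding K_def by (simp add: mult.assoc)
    then have "(real n + real k + 1) * mdist X a b < 1"
      using B0 by (smt (verit) mult_le_cancel_left1)
    then have dsmall: "mdist X a b < 1 / (real n + real k + 1)"
      by (simp add: field_simps)
    have "(real n + real k) * mdist X a b \<le> K * mdist X a b"
    proof (rule mult_right_mono[OF _ d0])
      have "0 \<le> 2 * B * (real n + real k + 1)" using B0 by simp
      moreover have "K = 2 * B * (real n + real k + 1) + (real n + real k + 1)"
        unfolding K_def by (simp add: algebra_simps)
      ultimately show "real n + real k \<le> K" by linarith
    qed
    then have "(real n + real k) * mdist X a b < mdist Y (f a) (f b)" using ab(3) by linarith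
    then show ?thesis using ab(1,2) dsmall by blast
  qed
  then obtain A Bp where AB: "\<And>n k. A n k \<in> C n" "\<And>n k. Bp n k \<in> C n"
    "\<And>n k. (real n + real k) * mdist X (A n k) (Bp n k) < mdist Y (f (A n k)) (f (Bp n k))"
    "\<And>n k. mdist X (A n k) (Bp n k) < 1 / (real n + real k + 1)"
    by metis
  define t where "t n k = (if even k then A n (k div 2) else Bp n (k div 2))" for n k
  have tC: "t n k \<in> C n" for n k unfolding t_def using AB(1,2) by simp
  have tM: "t n k \<in> mspace X" for n k using tC CM by blast
  have "\<not> cofinally_Bourbaki_quasi_complete X"
  proof (rule not_cbqc[of t])
    show "\<And>n k. t n k \<in> mspace X" by (rule tM)
    show "\<And>n j k. eps_chain X (1 / real (Suc n)) (t n j) (t n k)"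
      using C1 tC by (meson comp_chain subsetD)
    fix p assume pM: "p \<in> mspace X"
    obtain r L where rL: "r > 0" "L \<ge> 0" "\<forall>a\<in>mspace X. \<forall>b\<in>mspace X. mdist X p a < r \<longrightarrow> mdist X p b < r \<longrightarrow>
           mdist Y (f a) (f b) \<le> L * mdist X a b"
      using locLip_at[OF lf pM] by blast
    define Cb where "Cb = L + 2 / r"
    have key: "real n + real k < Cb" if near: "mdist X (A n k) p < r / 2 \<or> mdist X (Bp n k) p < r / 2" for n k
    proof (rule ccontr)
      assume "\<not> ?thesis"
      then have nk: "L \<le> real n + real k" "2 / r \<le> real n + real k"
        unfolding Cb_def using rL(2) rL(1) by (smt (verit, best) divide_nonneg_pos)+
      have "r / 2 * (real n + real k + 1) > 1"
      proof -
        have "r / 2 * (2 / r) = 1" using rL(1) by simp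
        moreover have "r / 2 * (2 / r) < r / 2 * (real n + real k + 1)"
          using nk(2) rL(1) by (intro mult_strict_left_mono) auto
        ultimately show ?thesis by linarith
      qed
      then have "1 / (real n + real k + 1) < r / 2" by (simp add: field_simps)
      then have dab: "mdist X (A n k) (Bp n k) < r / 2" using AB(4)[of n k] by linarith
      have aM: "A n k \<in> mspace X" and bM: "Bp n k \<in> mspace X" using AB(1,2) CM by blast+
      have tri1: "mdist X p (Bp n k) \<le> mdist X p (A n k) + mdist X (A n k) (Bp n k)"
        using mdist_triangle[where m=X and x=p and y="A n k" and z="Bp n k"] pM aM bM by blast
      have tri2: "mdist X p (A n k) \<le> mdist X p (Bp n k) + mdist X (Bp n k) (A n k)"
        using mdist_triangle[where m=X and x=p and y="Bp n k" and z="A n k"] pM aM bM by blast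
      have c1: "mdist X p (A n k) = mdist X (A n k) p" by (rule mdist_commute)
      have c2: "mdist X p (Bp n k) = mdist X (Bp n k) p" by (rule mdist_commute)
      have c3: "mdist X (Bp n k) (A n k) = mdist X (A n k) (Bp n k)" by (rule mdist_commute)
      have "mdist X p (A n k) < r \<and> mdist X p (Bp n k) < r"
        using near tri1 tri2 c1 c2 c3 dab by linarith
      then have "mdist Y (f (A n k)) (f (Bp n k)) \<le> L * mdist X (A n k) (Bp n k)"
        using rL(3) aM bM by blast
      moreover have "L * mdist X (A n k) (Bp n k) \<le> (real n + real k) * mdist X (A n k) (Bp n k)"
        using nk(1) by (intro mult_right_mono) auto
      ultimately show False using AB(3)[of n k] by linarith
    qed
    have sub: "{(n,k). mdist X (t n k) p < r / 2} \<subseteq> {(n,k). real n + real k < 2 * Cb + 1}"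
    proof
      fix z assume "z \<in> {(n,k). mdist X (t n k) p < r / 2}"
      then obtain n k where z: "z = (n,k)" "mdist X (t n k) p < r / 2" by blast
      have "mdist X (A n (k div 2)) p < r / 2 \<or> mdist X (Bp n (k div 2)) p < r / 2"
        using z(2) unfolding t_def by (cases "even k") auto
      then have "real n + real (k div 2) < Cb" by (rule key)
      moreover have "real k \<le> 2 * real (k div 2) + 1"
      proof -
        have "real k \<le> real (2 * (k div 2) + 1)" by (rule of_nat_mono) linarith
        then show ?thesis by simp
      qed
      ultimately have "real n + real k < 2 * Cb + 1" by linarith
      then show "z \<in> {(n,k). real n + real k < 2 * Cb + 1}" using z(1) by simp
    qed
    show "\<exists>e>0. finite {(n,k). mdist X (t n k) p < e}"
    proof (intro exI conjI)
      show "r / 2 > 0" using rL(1) by simp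
      show "finite {(n,k). mdist X (t n k) p < r / 2}"
        using fin_pairs[of "2 * Cb + 1"] sub by (rule finite_subset[rotated])
    qed
  qed
  then show False using cb by blast
qed

lemma cont_iff:
  "continuous_map (mtopology_of X) euclideanreal f \<longleftrightarrow>
    (\<forall>a\<in>mspace X. \<forall>e>0. \<exists>\<delta>>0. \<forall>y. y \<in> mspace X \<and> mdist X a y < \<delta> \<longrightarrow> dist (f a) (f y) < e)"
proof -
  have "continuous_map (mtopology_of X) (Met_TC.mtopology) f \<longleftrightarrow> f ` mspace X \<subseteq> UNIV \<and>
    (\<forall>a\<in>mspace X. \<forall>e>0. \<exists>\<delta>>0. \<forall>y. y \<in> mspace X \<and> mdist X a y < \<delta> \<longrightarrow> dist (f a) (f y) < e)"
    unfolding mtopology_of_def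
    by (rule Metric_space.metric_continuous_map[OF Metric_space_mspace_mdist Met_TC.Metric_space_axioms])
  then show ?thesis by simp
qed

definition sdist :: "'a metric \<Rightarrow> 'a set \<Rightarrow> 'a \<Rightarrow> real" where
  "sdist X A x = Inf ((\<lambda>y. mdist X x y) ` A)"

lemma sd_nonneg: "A \<noteq> {} \<Longrightarrow> 0 \<le> sdist X A x"
  unfolding sdist_def by (rule cInf_greatest) auto

lemma sd_le: "y \<in> A \<Longrightarrow> sdist X A x \<le> mdist X x y"
  unfolding sdist_def by (rule cInf_lower) (auto intro: bdd_belowI[of _ 0])

lemma sd_zero: "x \<in> A \<Longrightarrow> x \<in> mspace X \<Longrightarrow> sdist X A x = 0"
  using sd_le[of x A X x] sd_nonneg[of A X x] mdist_self_zero[of x X] by auto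

lemma sd_ge: "A \<noteq> {} \<Longrightarrow> \<forall>z\<in>A. r \<le> mdist X x z \<Longrightarrow> r \<le> sdist X A x"
  unfolding sdist_def by (rule cInf_greatest) auto

lemma sd_lip:
  assumes "A \<noteq> {}" "A \<subseteq> mspace X" "x \<in> mspace X" "y \<in> mspace X"
  shows "sdist X A x \<le> sdist X A y + mdist X x y"
proof -
  have "sdist X A x - mdist X x y \<le> sdist X A y"
    unfolding sdist_def[of X A y]
  proof (rule cInf_greatest)
    show "(\<lambda>z. mdist X y z) ` A \<noteq> {}" using assms(1) by simp
    fix w assume "w \<in> (\<lambda>z. mdist X y z) ` A"
    then obtain z where z: "z \<in> A" "w = mdist X y z" by blast
    have "sdist X A x \<le> mdist X x z" by (rule sd_le[OF z(1)])
    moreover have "mdist X x z \<le> mdist X x y + mdist X y z"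
      using mdist_triangle[where m=X and x=x and y=y and z=z] assms z(1) by blast
    ultimately show "sdist X A x - mdist X x y \<le> w" using z(2) by linarith
  qed
  then show ?thesis by linarith
qed

lemma sd_lip_abs:
  assumes "A \<noteq> {}" "A \<subseteq> mspace X" "x \<in> mspace X" "y \<in> mspace X"
  shows "\<bar>sdist X A x - sdist X A y\<bar> \<le> mdist X x y"
  using sd_lip[OF assms] sd_lip[OF assms(1,2,4,3)] mdist_commute[of X x y] by linarith

lemma fd_t1: fixes a b a' b' :: real assumes "0 < a + b" "0 < a' + b'"
  shows "a / (a + b) - a' / (a' + b') = (a * (b' - b) + b * (a - a')) / ((a + b) * (a' + b'))"
  using assms by (simp add: field_simps)

lemma fd_t2: fixes a b a' b' :: real assumes "0 \<le> a" "0 \<le> b"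
  shows "a * \<bar>b - b'\<bar> + b * \<bar>a - a'\<bar> \<le> (a + b) * (\<bar>a - a'\<bar> + \<bar>b - b'\<bar>)"
  using assms by (simp add: algebra_simps)

lemma fd_t3: fixes a b a' b' :: real assumes "0 \<le> a" "0 \<le> b"
  shows "\<bar>a * (b' - b)\<bar> + \<bar>b * (a - a')\<bar> = a * \<bar>b - b'\<bar> + b * \<bar>a - a'\<bar>"
  using assms by (simp add: abs_mult abs_minus_commute)

lemma fd_t5: fixes a b a' b' n :: real assumes "0 < a + b" "0 < a' + b'" "n \<le> (a + b) * s"
  shows "n / ((a + b) * (a' + b')) \<le> (a + b) * s / ((a + b) * (a' + b'))"
  using assms by (intro divide_right_mono) auto

lemma fd_t6: fixes a b a' b' n :: real assumes "0 < a + b"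
  shows "(a + b) * s / ((a + b) * (a' + b')) = s / (a' + b')"
  using assms by simp

lemma fd_t7: fixes a b a' b' n :: real assumes "0 < m" "m \<le> a' + b'" "0 \<le> s"
  shows "s / (a' + b') \<le> s / m"
  using assms by (intro divide_left_mono) auto

lemma frac_diff:
  fixes a b a' b' m :: real
  assumes "0 \<le> a" "0 \<le> b" "0 \<le> a'" "0 \<le> b'" "0 < a + b" "0 < m" "m \<le> a' + b'"
  shows "\<bar>a / (a + b) - a' / (a' + b')\<bar> \<le> (\<bar>a - a'\<bar> + \<bar>b - b'\<bar>) / m"
proof -
  have p2: "0 < a' + b'" using assms(6,7) by linarith
  have num: "\<bar>a * (b' - b) + b * (a - a')\<bar> \<le> (a + b) * (\<bar>a - a'\<bar> + \<bar>b - b'\<bar>)"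
    using abs_triangle_ineq[of "a * (b' - b)" "b * (a - a')"] fd_t3[OF assms(1,2), of b' a'] fd_t2[OF assms(1,2), of b' a']
    by linarith
  have pp: "0 < (a + b) * (a' + b')" using assms(5) p2 by simp
  have "\<bar>a / (a + b) - a' / (a' + b')\<bar> = \<bar>a * (b' - b) + b * (a - a')\<bar> / ((a + b) * (a' + b'))"
    unfolding fd_t1[OF assms(5) p2] using abs_div_pos[OF pp] by (rule sym)
  also have "\<dots> \<le> (a + b) * (\<bar>a - a'\<bar> + \<bar>b - b'\<bar>) / ((a + b) * (a' + b'))"
    by (rule fd_t5[OF assms(5) p2 num])
  also have "\<dots> = (\<bar>a - a'\<bar> + \<bar>b - b'\<bar>) / (a' + b')" by (rule fd_t6[OF assms(5)])
  also have "\<dots> \<le> (\<bar>a - a'\<bar> + \<bar>b - b'\<bar>) / m"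
    by (rule fd_t7[OF assms(6,7)]) simp
  finally show ?thesis .
qed

definition phi :: "'a metric \<Rightarrow> 'a set \<Rightarrow> 'a set \<Rightarrow> 'a \<Rightarrow> real" where
  "phi X F G x = (if F = {} then 1 else if G = {} then 0 else sdist X F x / (sdist X F x + sdist X G x))"

definition mclosed :: "'a metric \<Rightarrow> 'a set \<Rightarrow> bool" where
  "mclosed X F \<longleftrightarrow> F \<subseteq> mspace X \<and> (\<forall>x\<in>mspace X - F. \<exists>r>0. \<forall>z\<in>F. r \<le> mdist X x z)"

lemma sd_pos_out:
  assumes "mclosed X F" "F \<noteq> {}" "x \<in> mspace X" "x \<notin> F"
  shows "0 < sdist X F x"
proof -
  obtain r where "r > 0" "\<forall>z\<in>F. r \<le> mdist X x z" using assms unfolding mclosed_def by blast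
  then show ?thesis using sd_ge[OF assms(2), of r X x] by linarith
qed

lemma denom_pos:
  assumes "mclosed X F" "mclosed X G" "F \<inter> G = {}" "F \<noteq> {}" "G \<noteq> {}" "x \<in> mspace X"
  shows "0 < sdist X F x + sdist X G x"
proof (cases "x \<in> F")
  case True
  then have "x \<notin> G" using assms(3) by blast
  then show ?thesis using sd_pos_out[OF assms(2,5,6)] sd_nonneg[OF assms(4), of X x] by linarith
next
  case False
  then show ?thesis using sd_pos_out[OF assms(1,4,6)] sd_nonneg[OF assms(5), of X x] by linarith
qed

locale philoc =
  fixes X :: "'a metric" and F G :: "'a set"
  assumes cF: "mclosed X F" and cG: "mclosed X G" and dj: "F \<inter> G = {}"
begin

lemma FM: "F \<subseteq> mspace X" using cF unfolding mclosed_def by blast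
lemma GM: "G \<subseteq> mspace X" using cG unfolding mclosed_def by blast

lemma phi_range: "y \<in> mspace X \<Longrightarrow> 0 \<le> phi X F G y \<and> phi X F G y \<le> 1"
proof -
  assume yM: "y \<in> mspace X"
  show ?thesis
  proof (cases "F = {} \<or> G = {}")
    case True then show ?thesis unfolding phi_def by auto
  next
    case False
    then have ne: "F \<noteq> {}" "G \<noteq> {}" by auto
    have p: "0 < sdist X F y + sdist X G y" by (rule denom_pos[OF cF cG dj ne yM])
    have a: "0 \<le> sdist X F y" "0 \<le> sdist X G y" using sd_nonneg[OF ne(1)] sd_nonneg[OF ne(2)] by auto
    have "sdist X F y / (sdist X F y + sdist X G y) \<le> 1" using p a by (simp add: divide_le_eq_1)
    moreover have "0 \<le> sdist X F y / (sdist X F y + sdist X G y)" using p a by simp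
    ultimately show ?thesis using ne unfolding phi_def by simp
  qed
qed

lemma phi_G: "y \<in> G \<Longrightarrow> phi X F G y = 1"
proof -
  assume yG: "y \<in> G"
  have yM: "y \<in> mspace X" using yG GM by blast
  show ?thesis
  proof (cases "F = {}")
    case True then show ?thesis unfolding phi_def by simp
  next
    case False
    have "y \<notin> F" using yG dj by blast
    then have "0 < sdist X F y" by (rule sd_pos_out[OF cF False yM])
    moreover have "sdist X G y = 0" by (rule sd_zero[OF yG yM])
    ultimately show ?thesis using False yG unfolding phi_def by auto
  qed
qed

lemma phi_F: "y \<in> F \<Longrightarrow> phi X F G y = 0"
proof -
  assume yF: "y \<in> F"
  have yM: "y \<in> mspace X" using yF FM by blast
  have "sdist X F y = 0" by (rule sd_zero[OF yF yM])
  then show ?thesis using yF unfolding phi_def by auto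
qed

lemma phi_lip:
  assumes xM: "x \<in> mspace X"
  shows "\<exists>\<delta>>0. \<exists>L. \<forall>y\<in>mspace X. \<forall>z\<in>mspace X. mdist X x y < \<delta> \<longrightarrow> mdist X x z < \<delta> \<longrightarrow>
           \<bar>phi X F G y - phi X F G z\<bar> \<le> L * mdist X y z"
proof (cases "F = {} \<or> G = {}")
  case True
  then have "\<forall>y. phi X F G y = (if F = {} then 1 else 0)" unfolding phi_def by auto
  then have "\<forall>y\<in>mspace X. \<forall>z\<in>mspace X. mdist X x y < 1 \<longrightarrow> mdist X x z < 1 \<longrightarrow>
           \<bar>phi X F G y - phi X F G z\<bar> \<le> 0 * mdist X y z" by simp
  then show ?thesis using zero_less_one by blast
next
  case False
  then have ne: "F \<noteq> {}" "G \<noteq> {}" by auto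
  define c where "c = sdist X F x + sdist X G x"
  have c: "0 < c" unfolding c_def by (rule denom_pos[OF cF cG dj ne xM])
  have big: "c / 2 \<le> sdist X F y + sdist X G y" if "y \<in> mspace X" "mdist X x y < c / 4" for y
  proof -
    have "sdist X F x \<le> sdist X F y + mdist X x y" by (rule sd_lip[OF ne(1) FM xM that(1)])
    moreover have "sdist X G x \<le> sdist X G y + mdist X x y" by (rule sd_lip[OF ne(2) GM xM that(1)])
    ultimately show ?thesis using that(2) c_def by linarith
  qed
  show ?thesis
  proof (intro exI conjI ballI impI)
    show "0 < c / 4" using c by simp
    fix y z assume yz: "y \<in> mspace X" "z \<in> mspace X" "mdist X x y < c / 4" "mdist X x z < c / 4"
    have a: "0 \<le> sdist X F y" "0 \<le> sdist X G y" "0 \<le> sdist X F z" "0 \<le> sdist X G z"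
      using sd_nonneg[OF ne(1)] sd_nonneg[OF ne(2)] by auto
    have py: "0 < sdist X F y + sdist X G y" by (rule denom_pos[OF cF cG dj ne yz(1)])
    have "\<bar>phi X F G y - phi X F G z\<bar> \<le>
        (\<bar>sdist X F y - sdist X F z\<bar> + \<bar>sdist X G y - sdist X G z\<bar>) / (c / 2)"
      unfolding phi_def using ne
      by (simp only: if_False) (rule frac_diff[OF a py _ big[OF yz(2,4)]], simp add: c)
    also have "\<dots> \<le> (2 * mdist X y z) / (c / 2)"
    proof (rule divide_right_mono)
      show "\<bar>sdist X F y - sdist X F z\<bar> + \<bar>sdist X G y - sdist X G z\<bar> \<le> 2 * mdist X y z"
        using sd_lip_abs[OF ne(1) FM yz(1,2)] sd_lip_abs[OF ne(2) GM yz(1,2)] by linarith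
      show "0 \<le> c / 2" using c by simp
    qed
    also have "\<dots> = 4 / c * mdist X y z" by (simp add: field_simps)
    finally show "\<bar>phi X F G y - phi X F G z\<bar> \<le> 4 / c * mdist X y z" .
  qed
qed

end

lemma density_locLip:
  assumes fc: "continuous_map (mtopology_of X) euclideanreal f" and e: "e > 0"
  shows "\<exists>g. locally_Lipschitz X euclidean_metric g \<and> (\<forall>x\<in>mspace X. \<bar>f x - g x\<bar> < e)"
proof -
  define \<epsilon> where "\<epsilon> = e / 2"
  have ep: "\<epsilon> > 0" unfolding \<epsilon>_def using e by simp
  have ct: "\<forall>a\<in>mspace X. \<forall>e>0. \<exists>\<delta>>0. \<forall>y. y \<in> mspace X \<and> mdist X a y < \<delta> \<longrightarrow> \<bar>f a - f y\<bar> < e"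
    using fc unfolding cont_iff dist_real_def .
  define F where "F k = {x \<in> mspace X. f x \<le> real_of_int k * \<epsilon>}" for k :: int
  define G where "G k = {x \<in> mspace X. real_of_int k * \<epsilon> + \<epsilon> \<le> f x}" for k :: int
  have cF: "mclosed X (F k)" for k
    unfolding mclosed_def
  proof (intro conjI ballI)
    show "F k \<subseteq> mspace X" unfolding F_def by blast
    fix x assume x: "x \<in> mspace X - F k"
    then have gt: "real_of_int k * \<epsilon> < f x" "x \<in> mspace X" unfolding F_def by auto
    then obtain \<delta> where d: "\<delta> > 0" "\<forall>y. y \<in> mspace X \<and> mdist X x y < \<delta> \<longrightarrow> \<bar>f x - f y\<bar> < f x - real_of_int k * \<epsilon>"
      using ct by (meson diff_gt_0_iff_gt)
    have "\<forall>z\<in>F k. \<delta> \<le> mdist X x z"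
    proof
      fix z assume z: "z \<in> F k"
      show "\<delta> \<le> mdist X x z"
      proof (rule ccontr)
        assume "\<not> \<delta> \<le> mdist X x z"
        then have "\<bar>f x - f z\<bar> < f x - real_of_int k * \<epsilon>" using d(2) z unfolding F_def by auto
        then show False using z unfolding F_def by auto
      qed
    qed
    then show "\<exists>r>0. \<forall>z\<in>F k. r \<le> mdist X x z" using d(1) by blast
  qed
  have cG: "mclosed X (G k)" for k
    unfolding mclosed_def
  proof (intro conjI ballI)
    show "G k \<subseteq> mspace X" unfolding G_def by blast
    fix x assume x: "x \<in> mspace X - G k"
    then have gt: "f x < real_of_int k * \<epsilon> + \<epsilon>" "x \<in> mspace X" unfolding G_def by auto
    then obtain \<delta> where d: "\<delta> > 0" "\<forall>y. y \<in> mspace X \<and> mdist X x y < \<delta> \<longrightarrow> \<bar>f x - f y\<bar> < real_of_int k * \<epsilon> + \<epsilon> - f x"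
      using ct by (meson diff_gt_0_iff_gt)
    have "\<forall>z\<in>G k. \<delta> \<le> mdist X x z"
    proof
      fix z assume z: "z \<in> G k"
      show "\<delta> \<le> mdist X x z"
      proof (rule ccontr)
        assume "\<not> \<delta> \<le> mdist X x z"
        then have "\<bar>f x - f z\<bar> < real_of_int k * \<epsilon> + \<epsilon> - f x" using d(2) z unfolding G_def by auto
        then show False using z unfolding G_def by auto
      qed
    qed
    then show "\<exists>r>0. \<forall>z\<in>G k. r \<le> mdist X x z" using d(1) by blast
  qed
  have dj: "F k \<inter> G k = {}" for k unfolding F_def G_def using ep by auto
  interpret P: philoc X "F k" "G k" for k by unfold_locales (rule cF, rule cG, rule dj)
  define \<phi> where "\<phi> k = phi X (F k) (G k)" for k
  define g where "g x = \<epsilon> * (real_of_int \<lfloor>f x / \<epsilon>\<rfloor> + \<phi> \<lfloor>f x / \<epsilon>\<rfloor> x)" for x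
  have fl: "real_of_int \<lfloor>f y / \<epsilon>\<rfloor> * \<epsilon> \<le> f y" "f y < real_of_int \<lfloor>f y / \<epsilon>\<rfloor> * \<epsilon> + \<epsilon>" for y
  proof -
    have h1: "real_of_int \<lfloor>f y / \<epsilon>\<rfloor> \<le> f y / \<epsilon>" by linarith
    have h2: "f y / \<epsilon> < real_of_int \<lfloor>f y / \<epsilon>\<rfloor> + 1" by linarith
    have "real_of_int \<lfloor>f y / \<epsilon>\<rfloor> * \<epsilon> \<le> f y / \<epsilon> * \<epsilon>"
      by (rule mult_right_mono[OF h1]) (use ep in simp)
    then show "real_of_int \<lfloor>f y / \<epsilon>\<rfloor> * \<epsilon> \<le> f y" using ep by simp
    have "f y / \<epsilon> * \<epsilon> < (real_of_int \<lfloor>f y / \<epsilon>\<rfloor> + 1) * \<epsilon>"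
      by (rule mult_strict_right_mono[OF h2 ep])
    then have "f y < (real_of_int \<lfloor>f y / \<epsilon>\<rfloor> + 1) * \<epsilon>" using ep by simp
    then show "f y < real_of_int \<lfloor>f y / \<epsilon>\<rfloor> * \<epsilon> + \<epsilon>" by (simp add: algebra_simps)
  qed
  have phi1: "\<phi> k y = 1" if "y \<in> mspace X" "k < \<lfloor>f y / \<epsilon>\<rfloor>" for k y
  proof -
    have "real_of_int k + 1 \<le> real_of_int \<lfloor>f y / \<epsilon>\<rfloor>" using that(2) by linarith
    then have "(real_of_int k + 1) * \<epsilon> \<le> real_of_int \<lfloor>f y / \<epsilon>\<rfloor> * \<epsilon>" by (rule mult_right_mono) (use ep in simp)
    then have "y \<in> G k" using fl(1)[of y] that(1) unfolding G_def by (simp add: algebra_simps)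
    then show ?thesis unfolding \<phi>_def by (rule P.phi_G)
  qed
  have phi0: "\<phi> k y = 0" if "y \<in> mspace X" "\<lfloor>f y / \<epsilon>\<rfloor> < k" for k y
  proof -
    have "real_of_int \<lfloor>f y / \<epsilon>\<rfloor> + 1 \<le> real_of_int k" using that(2) by linarith
    then have "(real_of_int \<lfloor>f y / \<epsilon>\<rfloor> + 1) * \<epsilon> \<le> real_of_int k * \<epsilon>" by (rule mult_right_mono) (use ep in simp)
    then have "y \<in> F k" using fl(2)[of y] that(1) unfolding F_def by (simp add: algebra_simps)
    then show ?thesis unfolding \<phi>_def by (rule P.phi_F)
  qed
  have approx: "\<bar>f y - g y\<bar> < e" if "y \<in> mspace X" for y
  proof -
    have r: "0 \<le> \<phi> \<lfloor>f y / \<epsilon>\<rfloor> y" "\<phi> \<lfloor>f y / \<epsilon>\<rfloor> y \<le> 1" using P.phi_range[OF that] unfolding \<phi>_def by auto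
    have "g y = real_of_int \<lfloor>f y / \<epsilon>\<rfloor> * \<epsilon> + \<epsilon> * \<phi> \<lfloor>f y / \<epsilon>\<rfloor> y" unfolding g_def by (simp add: algebra_simps)
    moreover have "0 \<le> \<epsilon> * \<phi> \<lfloor>f y / \<epsilon>\<rfloor> y" "\<epsilon> * \<phi> \<lfloor>f y / \<epsilon>\<rfloor> y \<le> \<epsilon>"
      using r ep by (simp_all add: mult_left_le)
    ultimately have "\<bar>f y - g y\<bar> \<le> \<epsilon>" using fl[of y] by linarith
    then show ?thesis unfolding \<epsilon>_def using e by linarith
  qed
  have loc: "\<exists>\<delta>>0. Lipschitz_continuous_map (submetric X (mball_of X x \<delta>)) euclidean_metric g"
    if xM: "x \<in> mspace X" for x
  proof -
    define m where "m = \<lfloor>f x / \<epsilon>\<rfloor>"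
    obtain r1 where r1: "r1 > 0" "\<forall>y. y \<in> mspace X \<and> mdist X x y < r1 \<longrightarrow> \<bar>f x - f y\<bar> < \<epsilon>"
      using ct xM ep by blast
    obtain d1 L1 where d1: "d1 > 0" "\<forall>y\<in>mspace X. \<forall>z\<in>mspace X. mdist X x y < d1 \<longrightarrow> mdist X x z < d1 \<longrightarrow>
           \<bar>\<phi> (m - 1) y - \<phi> (m - 1) z\<bar> \<le> L1 * mdist X y z"
      using P.phi_lip[OF xM, of "m - 1"] unfolding \<phi>_def by blast
    obtain d2 L2 where d2: "d2 > 0" "\<forall>y\<in>mspace X. \<forall>z\<in>mspace X. mdist X x y < d2 \<longrightarrow> mdist X x z < d2 \<longrightarrow>
           \<bar>\<phi> m y - \<phi> m z\<bar> \<le> L2 * mdist X y z"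
      using P.phi_lip[OF xM, of "m"] unfolding \<phi>_def by blast
    obtain d3 L3 where d3: "d3 > 0" "\<forall>y\<in>mspace X. \<forall>z\<in>mspace X. mdist X x y < d3 \<longrightarrow> mdist X x z < d3 \<longrightarrow>
           \<bar>\<phi> (m + 1) y - \<phi> (m + 1) z\<bar> \<le> L3 * mdist X y z"
      using P.phi_lip[OF xM, of "m + 1"] unfolding \<phi>_def by blast
    define \<delta> where "\<delta> = min r1 (min d1 (min d2 d3))"
    have \<delta>: "\<delta> > 0" "\<delta> \<le> r1" "\<delta> \<le> d1" "\<delta> \<le> d2" "\<delta> \<le> d3" unfolding \<delta>_def using r1 d1 d2 d3 by auto
    have gform: "g y = \<epsilon> * (real_of_int (m - 1) + \<phi> (m - 1) y + \<phi> m y + \<phi> (m + 1) y)"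
      if y: "y \<in> mspace X" "mdist X x y < \<delta>" for y
    proof -
      define m' where "m' = \<lfloor>f y / \<epsilon>\<rfloor>"
      have fy: "\<bar>f x - f y\<bar> < \<epsilon>" using r1(2) y \<delta>(2) by auto
      have "real_of_int m' * \<epsilon> < (real_of_int m + 2) * \<epsilon>"
        using fl(1)[of y] fl(2)[of x] fy unfolding m_def m'_def by (simp add: algebra_simps)
      then have "real_of_int m' < real_of_int m + 2" using ep by simp
      then have up: "m' \<le> m + 1" by linarith
      have "(real_of_int m - 1) * \<epsilon> < (real_of_int m' + 1) * \<epsilon>"
        using fl(2)[of y] fl(1)[of x] fy unfolding m_def m'_def by (simp add: algebra_simps)
      then have "real_of_int m - 1 < real_of_int m' + 1" using ep by simp
      then have lo: "m - 1 \<le> m'" by linarith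
      have "m' = m - 1 \<or> m' = m \<or> m' = m + 1" using up lo by linarith
      then show ?thesis
      proof (elim disjE)
        assume h: "m' = m - 1"
        then have "\<phi> m y = 0" "\<phi> (m + 1) y = 0" using phi0[OF y(1)] unfolding m'_def by auto
        then show ?thesis unfolding g_def using h unfolding m'_def by simp
      next
        assume h: "m' = m"
        then have "\<phi> (m - 1) y = 1" "\<phi> (m + 1) y = 0" using phi0[OF y(1)] phi1[OF y(1)] unfolding m'_def by auto
        then show ?thesis unfolding g_def using h unfolding m'_def by simp
      next
        assume h: "m' = m + 1"
        then have "\<phi> (m - 1) y = 1" "\<phi> m y = 1" using phi1[OF y(1)] unfolding m'_def by auto
        then show ?thesis unfolding g_def using h unfolding m'_def by simp
      qed
    qed
    have "Lipschitz_continuous_map (submetric X (mball_of X x \<delta>)) euclidean_metric g"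
      unfolding Lipschitz_continuous_map_def
    proof (intro conjI exI ballI)
      show "g \<in> mspace (submetric X (mball_of X x \<delta>)) \<rightarrow> mspace euclidean_metric" by simp
      fix y z assume "y \<in> mspace (submetric X (mball_of X x \<delta>))" "z \<in> mspace (submetric X (mball_of X x \<delta>))"
      then have yz: "y \<in> mspace X" "z \<in> mspace X" "mdist X x y < \<delta>" "mdist X x z < \<delta>" by auto
      have e1: "\<bar>\<phi> (m - 1) y - \<phi> (m - 1) z\<bar> \<le> L1 * mdist X y z" using d1(2) yz \<delta> by auto
      have e2: "\<bar>\<phi> m y - \<phi> m z\<bar> \<le> L2 * mdist X y z" using d2(2) yz \<delta> by auto
      have e3: "\<bar>\<phi> (m + 1) y - \<phi> (m + 1) z\<bar> \<le> L3 * mdist X y z" using d3(2) yz \<delta> by auto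
      have "g y - g z = \<epsilon> * ((\<phi> (m - 1) y - \<phi> (m - 1) z) + (\<phi> m y - \<phi> m z) + (\<phi> (m + 1) y - \<phi> (m + 1) z))"
        using gform[OF yz(1,3)] gform[OF yz(2,4)] by (simp add: algebra_simps)
      then have "\<bar>g y - g z\<bar> = \<epsilon> * \<bar>(\<phi> (m - 1) y - \<phi> (m - 1) z) + (\<phi> m y - \<phi> m z) + (\<phi> (m + 1) y - \<phi> (m + 1) z)\<bar>"
        using ep by (simp add: abs_mult)
      also have "\<dots> \<le> \<epsilon> * (L1 * mdist X y z + L2 * mdist X y z + L3 * mdist X y z)"
      proof (rule mult_left_mono)
        show "0 \<le> \<epsilon>" using ep by simp
        have "\<bar>(\<phi> (m - 1) y - \<phi> (m - 1) z) + (\<phi> m y - \<phi> m z) + (\<phi> (m + 1) y - \<phi> (m + 1) z)\<bar>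
          \<le> \<bar>\<phi> (m - 1) y - \<phi> (m - 1) z\<bar> + \<bar>\<phi> m y - \<phi> m z\<bar> + \<bar>\<phi> (m + 1) y - \<phi> (m + 1) z\<bar>"
          by (rule order_trans[OF abs_triangle_ineq add_right_mono[OF abs_triangle_ineq]])
        then show "\<bar>(\<phi> (m - 1) y - \<phi> (m - 1) z) + (\<phi> m y - \<phi> m z) + (\<phi> (m + 1) y - \<phi> (m + 1) z)\<bar>
          \<le> L1 * mdist X y z + L2 * mdist X y z + L3 * mdist X y z" using e1 e2 e3 by linarith
      qed
      also have "\<dots> = \<epsilon> * (L1 + L2 + L3) * mdist X y z" by (simp add: algebra_simps)
      finally show "mdist euclidean_metric (g y) (g z) \<le> \<epsilon> * (L1 + L2 + L3) * mdist (submetric X (mball_of X x \<delta>)) y z"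
        by (simp add: dist_real_def)
    qed
    then show ?thesis using \<delta>(1) by blast
  qed
  have "locally_Lipschitz X euclidean_metric g"
    unfolding locally_Lipschitz_def using loc by simp
  then show ?thesis using approx by blast
qed

lemma locLip_cont:
  assumes lf: "locally_Lipschitz X euclidean_metric (f :: 'a \<Rightarrow> real)"
  shows "continuous_map (mtopology_of X) euclideanreal f"
  unfolding cont_iff
proof (intro ballI allI impI)
  fix a :: 'a and e :: real assume aM: "a \<in> mspace X" and e: "e > 0"
  obtain r L where rL: "r > 0" "L \<ge> 0" "\<forall>u\<in>mspace X. \<forall>v\<in>mspace X. mdist X a u < r \<longrightarrow> mdist X a v < r \<longrightarrow>
           mdist euclidean_metric (f u) (f v) \<le> L * mdist X u v"
    using locLip_at[OF lf aM] by blast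
  define \<delta> where "\<delta> = min r (e / (L + 1))"
  have d: "\<delta> > 0" "\<delta> \<le> r" "\<delta> \<le> e / (L + 1)" unfolding \<delta>_def using rL e by auto
  have "\<forall>y. y \<in> mspace X \<and> mdist X a y < \<delta> \<longrightarrow> dist (f a) (f y) < e"
  proof (intro allI impI)
    fix y assume y: "y \<in> mspace X \<and> mdist X a y < \<delta>"
    have aa: "mdist X a a < r" using mdist_self_zero[OF aM] rL(1) by simp
    have "dist (f a) (f y) \<le> L * mdist X a y" using rL(3) aM y aa d(2) by auto
    also have "\<dots> \<le> L * (e / (L + 1))" using y d(3) rL(2) by (intro mult_left_mono) auto
    also have "\<dots> < e" using rL(2) e by (simp add: field_simps)
    finally show "dist (f a) (f y) < e" .
  qed
  then show "\<exists>\<delta>>0. \<forall>y. y \<in> mspace X \<and> mdist X a y < \<delta> \<longrightarrow> dist (f a) (f y) < e" using d(1) by blast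
qed

lemma bad_function:
  fixes X :: "'a metric"
  assumes sb: "strongly_uniformly_locally_bounded X" and ncb: "\<not> cofinally_Bourbaki_quasi_complete X"
  shows "\<exists>f::'a \<Rightarrow> real. locally_Lipschitz X euclidean_metric f \<and>
    (\<forall>g. strongly_uniformly_locally_Lipschitz X euclidean_metric g \<longrightarrow> \<not> (\<forall>x\<in>mspace X. \<bar>f x - g x\<bar> < 1))"
proof -
  obtain s where s: "range s \<subseteq> mspace X" "cofinally_Bourbaki_quasi_Cauchy X s" "\<And>p. \<not> cluster_point X s p"
    using ncb unfolding cofinally_Bourbaki_quasi_complete_def by blast
  have sM: "s n \<in> mspace X" for n using s(1) by blast
  have nc: "\<exists>\<eta>>0. \<exists>N. \<forall>k\<ge>N. \<eta> \<le> mdist X (s k) p" if pM: "p \<in> mspace X" for p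
    using s(3)[of p] pM unfolding cluster_point_def by (auto simp: not_less)
  define tm where "tm n x = real n - real n * real n * mdist X x (s n)" for n x
  define f where "f x = Sup (insert 0 (range (\<lambda>n. tm n x)))" for x
  have loc: "\<exists>r>0. \<exists>K::nat. \<forall>x\<in>mspace X. mdist X p x < r \<longrightarrow> (\<forall>n\<ge>K. tm n x < 0)"
    if pM: "p \<in> mspace X" for p
  proof -
    obtain \<eta> N where eN: "\<eta> > 0" "\<forall>k\<ge>N. \<eta> \<le> mdist X (s k) p" using nc[OF pM] by blast
    define K where "K = max N (nat \<lceil>2 / \<eta>\<rceil> + 1)"
    have "\<forall>x\<in>mspace X. mdist X p x < \<eta> / 2 \<longrightarrow> (\<forall>n\<ge>K. tm n x < 0)"
    proof (intro ballI impI allI)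
      fix x n assume xM: "x \<in> mspace X" and px: "mdist X p x < \<eta> / 2" and nK: "K \<le> n"
      have "\<eta> \<le> mdist X (s n) p" using eN(2) nK unfolding K_def by auto
      moreover have "mdist X (s n) p \<le> mdist X (s n) x + mdist X x p"
        using mdist_triangle[where m=X and x="s n" and y=x and z=p] sM xM pM by blast
      moreover have "mdist X x p = mdist X p x" by (rule mdist_commute)
      moreover have "mdist X (s n) x = mdist X x (s n)" by (rule mdist_commute)
      ultimately have dxs: "\<eta> / 2 < mdist X x (s n)" using px by linarith
      have "2 / \<eta> + 1 \<le> real n"
      proof -
        have "nat \<lceil>2 / \<eta>\<rceil> + 1 \<le> n" using nK unfolding K_def by auto
        then have "real (nat \<lceil>2 / \<eta>\<rceil>) + 1 \<le> real n" by linarith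
        moreover have "2 / \<eta> \<le> real (nat \<lceil>2 / \<eta>\<rceil>)" by linarith
        ultimately show ?thesis by linarith
      qed
      moreover have "0 < 2 / \<eta>" using eN(1) by simp
      ultimately have npos: "0 < real n" and n2: "2 / \<eta> \<le> real n" by linarith+
      have n1: "1 \<le> real n * (\<eta> / 2)"
      proof -
        have "2 / \<eta> * (\<eta> / 2) \<le> real n * (\<eta> / 2)" using n2 eN(1) by (intro mult_right_mono) auto
        moreover have "2 / \<eta> * (\<eta> / 2) = 1" using eN(1) by simp
        ultimately show ?thesis by linarith
      qed
      have "real n \<le> real n * (real n * (\<eta> / 2))" using n1 npos by simp
      also have "\<dots> < real n * (real n * mdist X x (s n))"
        using dxs npos by (intro mult_strict_left_mono) auto
      finally show "tm n x < 0" unfolding tm_def by (simp add: algebra_simps)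
    qed
    then show ?thesis using eN(1) by (intro exI[of _ "\<eta> / 2"]) auto
  qed
  have bdd: "bdd_above (insert 0 (range (\<lambda>n. tm n x)))" if xM: "x \<in> mspace X" for x
  proof -
    obtain r K where rK: "r > 0" "\<forall>y\<in>mspace X. mdist X x y < r \<longrightarrow> (\<forall>n\<ge>K. tm n y < 0)"
      using loc[OF xM] by blast
    have xx: "mdist X x x < r" using mdist_self_zero[OF xM] rK(1) by simp
    have "\<forall>n. tm n x \<le> real K"
    proof
      fix n
      show "tm n x \<le> real K"
      proof (cases "K \<le> n")
        case True then show ?thesis using rK(2) xM xx by fastforce
      next
        case False
        then have "tm n x \<le> real n" unfolding tm_def by simp
        then show ?thesis using False by linarith
      qed
    qed
    then show ?thesis by (intro bdd_aboveI[of _ "real K"]) auto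
  qed
  have f_ge: "tm n x \<le> f x" "0 \<le> f x" if "x \<in> mspace X" for n x
    unfolding f_def using bdd[OF that] by (auto intro: cSup_upper)
  have f_le: "f x \<le> B" if "\<forall>n. tm n x \<le> B" "0 \<le> B" for x B
    unfolding f_def using that by (intro cSup_least) auto
  have fs: "real n \<le> f (s n)" for n
    using f_ge(1)[OF sM[of n], of n] mdist_self_zero[OF sM[of n]] unfolding tm_def by simp
  have lf: "locally_Lipschitz X euclidean_metric f"
    unfolding locally_Lipschitz_def
  proof (intro conjI ballI)
    show "f \<in> mspace X \<rightarrow> mspace euclidean_metric" by simp
    fix p assume pM: "p \<in> mspace X"
    obtain r K where rK: "r > 0" "\<forall>y\<in>mspace X. mdist X p y < r \<longrightarrow> (\<forall>n\<ge>K. tm n y < 0)"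
      using loc[OF pM] by blast
    have one: "f x \<le> f y + real K * real K * mdist X x y"
      if xy: "x \<in> mspace X" "y \<in> mspace X" "mdist X p x < r" "mdist X p y < r" for x y
    proof (rule f_le)
      show "0 \<le> f y + real K * real K * mdist X x y" using f_ge(2)[OF xy(2)] by simp
      show "\<forall>n. tm n x \<le> f y + real K * real K * mdist X x y"
      proof
        fix n
        show "tm n x \<le> f y + real K * real K * mdist X x y"
        proof (cases "K \<le> n")
          case True
          then have "tm n x < 0" using rK(2) xy by blast
          moreover have "0 \<le> real K * real K * mdist X x y" by simp
          ultimately show ?thesis using f_ge(2)[OF xy(2)] by linarith
        next
          case False
          have tri: "mdist X y (s n) \<le> mdist X y x + mdist X x (s n)"
            using mdist_triangle[where m=X and x=y and y=x and z="s n"] sM xy by blast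
          have cm: "mdist X y x = mdist X x y" by (rule mdist_commute)
          have nn: "real n * real n \<le> real K * real K" using False by (simp add: mult_mono)
          have "tm n x = real n - real n * real n * mdist X x (s n)" by (simp add: tm_def)
          also have "\<dots> \<le> real n - real n * real n * (mdist X y (s n) - mdist X x y)"
            using tri cm by (intro diff_left_mono mult_left_mono) auto
          also have "\<dots> = tm n y + real n * real n * mdist X x y" by (simp add: tm_def algebra_simps)
          also have "\<dots> \<le> f y + real K * real K * mdist X x y"
            using f_ge(1)[OF xy(2), of n] nn by (intro add_mono mult_right_mono) auto
          finally show ?thesis .
        qed
      qed
    qed
    have "Lipschitz_continuous_map (submetric X (mball_of X p r)) euclidean_metric f"
      unfolding Lipschitz_continuous_map_def
    proof (intro conjI exI ballI)
      show "f \<in> mspace (submetric X (mball_of X p r)) \<rightarrow> mspace euclidean_metric" by simp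
      fix x y assume "x \<in> mspace (submetric X (mball_of X p r))" "y \<in> mspace (submetric X (mball_of X p r))"
      then have xy: "x \<in> mspace X" "y \<in> mspace X" "mdist X p x < r" "mdist X p y < r" by auto
      have "f x \<le> f y + real K * real K * mdist X x y" by (rule one[OF xy])
      moreover have "f y \<le> f x + real K * real K * mdist X y x" by (rule one[OF xy(2,1,4,3)])
      moreover have "mdist X y x = mdist X x y" by (rule mdist_commute)
      ultimately show "mdist euclidean_metric (f x) (f y) \<le> real K * real K * mdist (submetric X (mball_of X p r)) x y"
        by (simp add: dist_real_def abs_le_iff)
    qed
    then show "\<exists>\<delta>>0. Lipschitz_continuous_map (submetric X (mball_of X p \<delta>)) euclidean_metric f"
      using rK(1) by blast
  qed
  have no_g: "\<not> (\<forall>x\<in>mspace X. \<bar>f x - g x\<bar> < 1)"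
    if sg: "strongly_uniformly_locally_Lipschitz X euclidean_metric g" for g
  proof
    assume close: "\<forall>x\<in>mspace X. \<bar>f x - g x\<bar> < 1"
    obtain \<delta>1 where d1: "\<delta>1 > 0" "\<forall>x\<in>mspace X. Lipschitz_continuous_map (submetric X (chain_comp X x \<delta>1)) euclidean_metric g"
      using sg unfolding strongly_uniformly_locally_Lipschitz_def by blast
    obtain \<delta>0 where d0: "\<delta>0 > 0" "\<forall>x\<in>mspace X. Metric_space.mbounded (mspace X) (mdist X) (chain_comp X x \<delta>0)"
      using sb unfolding strongly_uniformly_locally_bounded_def by blast
    define \<delta> where "\<delta> = min \<delta>0 \<delta>1"
    have d: "\<delta> > 0" "\<delta> \<le> \<delta>0" "\<delta> \<le> \<delta>1" unfolding \<delta>_def using d0 d1 by auto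
    obtain N where N: "infinite N" "\<forall>j\<in>N. \<forall>k\<in>N. eps_chain X \<delta> (s j) (s k)"
      using s(2) d(1) unfolding cofinally_Bourbaki_quasi_Cauchy_def by blast
    obtain j where j: "j \<in> N" using N(1) by (metis finite.emptyI ex_in_conv)
    obtain B0 where B0: "\<forall>a\<in>chain_comp X (s j) \<delta>0. \<forall>b\<in>chain_comp X (s j) \<delta>0. mdist X a b \<le> B0"
      using d0(2) sM[of j] unfolding mb_iff by blast
    obtain Bl where Bl: "\<forall>a\<in>chain_comp X (s j) \<delta>1 \<inter> mspace X. \<forall>b\<in>chain_comp X (s j) \<delta>1 \<inter> mspace X.
        dist (g a) (g b) \<le> Bl * mdist X a b"
      using d1(2) sM[of j] unfolding Lipschitz_continuous_map_def by auto
    have bound: "real k < g (s j) + \<bar>Bl\<bar> * B0 + 1" if kN: "k \<in> N" for k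
    proof -
      have ch: "s k \<in> chain_comp X (s j) \<delta>" using N(2) j kN sM[of k] unfolding chain_comp_def by blast
      have c0: "s k \<in> chain_comp X (s j) \<delta>0" "s j \<in> chain_comp X (s j) \<delta>0"
        using comp_mono[OF d(2), of X "s j"] ch comp_self[OF sM[of j]] by auto
      have c1: "s k \<in> chain_comp X (s j) \<delta>1 \<inter> mspace X" "s j \<in> chain_comp X (s j) \<delta>1 \<inter> mspace X"
        using comp_mono[OF d(3), of X "s j"] ch comp_self[OF sM[of j]] sM by auto
      have dd: "mdist X (s k) (s j) \<le> B0" using B0 c0 by blast
      have "\<bar>g (s k) - g (s j)\<bar> \<le> Bl * mdist X (s k) (s j)" using Bl c1 by (auto simp: dist_real_def)
      also have "\<dots> \<le> \<bar>Bl\<bar> * mdist X (s k) (s j)" by (simp add: mult_right_mono)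
      also have "\<dots> \<le> \<bar>Bl\<bar> * B0" using dd by (simp add: mult_left_mono)
      finally have "g (s k) \<le> g (s j) + \<bar>Bl\<bar> * B0" by linarith
      moreover have "f (s k) - 1 < g (s k)" using close sM[of k] by fastforce
      ultimately show ?thesis using fs[of k] by linarith
    qed
    obtain k where k: "k \<in> N" "nat \<lceil>g (s j) + \<bar>Bl\<bar> * B0 + 1\<rceil> \<le> k"
      using N(1) unfolding infinite_nat_iff_unbounded_le by blast
    then have "g (s j) + \<bar>Bl\<bar> * B0 + 1 \<le> real k" by linarith
    then show False using bound[OF k(1)] by linarith
  qed
  show ?thesis
  proof (intro exI[of _ f] conjI allI impI)
    show "locally_Lipschitz X euclidean_metric f" by (rule lf)
    fix g :: "'a \<Rightarrow> real" assume "strongly_uniformly_locally_Lipschitz X euclidean_metric g"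
    then show "\<not> (\<forall>x\<in>mspace X. \<bar>f x - g x\<bar> < 1)" by (rule no_g)
  qed
qed

theorem mainTheorem1:
  fixes X :: "'a metric"
  shows "(cofinally_Bourbaki_quasi_complete X \<longrightarrow> cond2 X TYPE('b))
   \<and> (cond2 X TYPE(real) \<longrightarrow> cofinally_Bourbaki_quasi_complete X)
   \<and> (cofinally_Bourbaki_quasi_complete X \<longleftrightarrow>
        strongly_uniformly_locally_bounded X \<and>
        (\<forall>f::'a \<Rightarrow> real. locally_Lipschitz X euclidean_metric f \<longrightarrow>
            strongly_uniformly_locally_Lipschitz X euclidean_metric f))
   \<and> (cofinally_Bourbaki_quasi_complete X \<longleftrightarrow>
        strongly_uniformly_locally_bounded X \<and>
        (\<forall>f::'a \<Rightarrow> real. continuous_map (mtopology_of X) euclideanreal f \<longrightarrow>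
            (\<forall>e>0. \<exists>g. strongly_uniformly_locally_Lipschitz X euclidean_metric g \<and>
                  (\<forall>x\<in>mspace X. \<bar>f x - g x\<bar> < e))))"
proof -
  have C3: "cofinally_Bourbaki_quasi_complete X"
    if sb: "strongly_uniformly_locally_bounded X"
      and h: "\<forall>f::'a \<Rightarrow> real. locally_Lipschitz X euclidean_metric f \<longrightarrow>
            strongly_uniformly_locally_Lipschitz X euclidean_metric f"
  proof (rule ccontr)
    assume "\<not> cofinally_Bourbaki_quasi_complete X"
    then obtain f :: "'a \<Rightarrow> real" where f: "locally_Lipschitz X euclidean_metric f"
      "\<forall>g. strongly_uniformly_locally_Lipschitz X euclidean_metric g \<longrightarrow> \<not> (\<forall>x\<in>mspace X. \<bar>f x - g x\<bar> < 1)"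
      using bad_function[OF sb] by blast
    have "strongly_uniformly_locally_Lipschitz X euclidean_metric f" using h f(1) by blast
    then show False using f(2) by auto
  qed
  have D1: "(\<forall>f::'a \<Rightarrow> real. continuous_map (mtopology_of X) euclideanreal f \<longrightarrow>
            (\<forall>e>0. \<exists>g. strongly_uniformly_locally_Lipschitz X euclidean_metric g \<and>
                  (\<forall>x\<in>mspace X. \<bar>f x - g x\<bar> < e)))"
    if cb: "cofinally_Bourbaki_quasi_complete X"
  proof (intro allI impI)
    fix f :: "'a \<Rightarrow> real" and e :: real
    assume fc: "continuous_map (mtopology_of X) euclideanreal f" and e: "e > 0"
    obtain g :: "'a \<Rightarrow> real" where g: "locally_Lipschitz X euclidean_metric g" "\<forall>x\<in>mspace X. \<bar>f x - g x\<bar> < e"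
      using density_locLip[OF fc e] by blast
    show "\<exists>g. strongly_uniformly_locally_Lipschitz X euclidean_metric g \<and> (\<forall>x\<in>mspace X. \<bar>f x - g x\<bar> < e)"
      using cbqc_sull[OF cb g(1)] g(2) by blast
  qed
  have D2: "cofinally_Bourbaki_quasi_complete X"
    if sb: "strongly_uniformly_locally_bounded X"
      and h: "\<forall>f::'a \<Rightarrow> real. continuous_map (mtopology_of X) euclideanreal f \<longrightarrow>
            (\<forall>e>0. \<exists>g. strongly_uniformly_locally_Lipschitz X euclidean_metric g \<and>
                  (\<forall>x\<in>mspace X. \<bar>f x - g x\<bar> < e))"
  proof (rule ccontr)
    assume "\<not> cofinally_Bourbaki_quasi_complete X"
    then obtain f :: "'a \<Rightarrow> real" where f: "locally_Lipschitz X euclidean_metric f"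
      "\<forall>g. strongly_uniformly_locally_Lipschitz X euclidean_metric g \<longrightarrow> \<not> (\<forall>x\<in>mspace X. \<bar>f x - g x\<bar> < 1)"
      using bad_function[OF sb] by blast
    have "continuous_map (mtopology_of X) euclideanreal f" by (rule locLip_cont[OF f(1)])
    then obtain g where "strongly_uniformly_locally_Lipschitz X euclidean_metric g" "\<forall>x\<in>mspace X. \<bar>f x - g x\<bar> < 1"
      using h zero_less_one by blast
    then show False using f(2) by blast
  qed
  have P1: "cofinally_Bourbaki_quasi_complete X \<longrightarrow> cond2 X TYPE('b)"
    unfolding cond2_def using cbqc_sulb cbqc_sull by blast
  have P2: "cond2 X TYPE(real) \<longrightarrow> cofinally_Bourbaki_quasi_complete X"
  proof
    assume "cond2 X TYPE(real)"
    then have "strongly_uniformly_locally_bounded X"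
      "\<forall>f::'a \<Rightarrow> real. locally_Lipschitz X euclidean_metric f \<longrightarrow>
            strongly_uniformly_locally_Lipschitz X euclidean_metric f"
      unfolding cond2_def by blast+
    then show "cofinally_Bourbaki_quasi_complete X" by (rule C3)
  qed
  have P3: "cofinally_Bourbaki_quasi_complete X \<longleftrightarrow>
        strongly_uniformly_locally_bounded X \<and>
        (\<forall>f::'a \<Rightarrow> real. locally_Lipschitz X euclidean_metric f \<longrightarrow>
            strongly_uniformly_locally_Lipschitz X euclidean_metric f)"
    using C3 cbqc_sulb cbqc_sull by blast
  have P4: "cofinally_Bourbaki_quasi_complete X \<longleftrightarrow>
        strongly_uniformly_locally_bounded X \<and>
        (\<forall>f::'a \<Rightarrow> real. continuous_map (mtopology_of X) euclideanreal f \<longrightarrow>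
            (\<forall>e>0. \<exists>g. strongly_uniformly_locally_Lipschitz X euclidean_metric g \<and>
                  (\<forall>x\<in>mspace X. \<bar>f x - g x\<bar> < e)))"
    using D1 D2 cbqc_sulb by blast
  show ?thesis using P1 P2 P3 P4 by blast
qed

end
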